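(* Let $\mathfrak{g}$ be a four-dimensional real Lie algebra, oriented by a volume form $\mu\in\Lambda^4(\mathfrak{g}^* )$, and assume $\mathfrak{g}$ admits a positively oriented symplectic form, i.e. a closed 2-form $\omega$ with $\omega\wedge\omega=c\,\mu$ for some $c>0$. Then $\mathfrak{g}$ satisfies the tame-compatible property if and only if the space $B_2$ of boundary 2-vectors is negative semi-definite for the bilinear form $\Phi_\mu(u,v)=\mu(u\wedge v)$ on $\Lambda^2(\mathfrak{g})$, that is, if and only if $\mu(u\wedge u)\le 0$ for all $u\in B_2$.
   Context: The Chevalley–Eilenberg differential $d$ on forms on a Lie algebra $\mathfrak{g}$ is defined on 1-forms by $d\alpha(u,v)=-\alpha([u,v])$ and extended to all forms by the Leibniz rule. $\mathcal{Z}^2$ denotes the space of closed 2-forms ($d\alpha=0$). The space of boundary 2-vectors $B_2\subset\Lambda^2(\mathfrak{g})$ is the annihilator of $\mathcal{Z}^2$: $B_2=\{u\in\Lambda^2(\mathfrak{g}) : \alpha(u)=0 \text{ for all } \alpha\in\mathcal{Z}^2\}$. A symplectic form on $\mathfrak{g}$ is a closed non-degenerate 2-form. An almost complex structure on $\mathfrak{g}$ is a linear map $J:\mathfrak{g}\to\mathfrak{g}$ with $J^2=-1$; it induces the given orientation if for some (equivalently any) basis of the form $(v_1,Jv_1,v_2,Jv_2)$ one has $\mu(v_1,Jv_1,v_2,Jv_2)>0$. $J$ is tamed by a symplectic form $\omega$ if $\omega(u,Ju)>0$ for all $u\neq0$; $J$ is compatible with $\omega$ if it is tamed by $\omega$ and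 $\omega(Jv,Jw)=\omega(v,w)$ for all $v,w$. An oriented Lie algebra $\mathfrak{g}$ satisfies the tame-compatible property if every almost complex structure $J$ on $\mathfrak{g}$ inducing the given orientation which is tamed by some symplectic form is also compatible with some symplectic form. *)

theory Defs
  imports "HOL-Analysis.Analysis"
begin

text \<open>The four-dimensional real Lie algebra is modelled on the vector space real^4
  with a bracket given as a bilinear, antisymmetric map satisfying Jacobi.
  Every four-dimensional real Lie algebra is isomorphic to one of these.\<close>

type_synonym vec4 = "real^4"

definition lie_bracket :: "(vec4 \<Rightarrow> vec4 \<Rightarrow> vec4) \<Rightarrow> bool" where
  "lie_bracket br \<longleftrightarrow> bilinear br \<and> (\<forall>x y. br x y = - br y x)
     \<and> (\<forall>x y z. br x (br y z) + br y (br z x) + br z (br x y) = 0)"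

definition form2 :: "(vec4 \<Rightarrow> vec4 \<Rightarrow> real) \<Rightarrow> bool" where
  "form2 \<alpha> \<longleftrightarrow> bilinear \<alpha> \<and> (\<forall>x. \<alpha> x x = 0)"

text \<open>Closedness of a 2-form under the Chevalley--Eilenberg differential:
  d alpha (x,y,z) = - alpha([x,y],z) + alpha([x,z],y) - alpha([y,z],x).\<close>
definition d2 :: "(vec4 \<Rightarrow> vec4 \<Rightarrow> vec4) \<Rightarrow> (vec4 \<Rightarrow> vec4 \<Rightarrow> real) \<Rightarrow> vec4 \<Rightarrow> vec4 \<Rightarrow> vec4 \<Rightarrow> real" where
  "d2 br \<alpha> x y z = - \<alpha> (br x y) z + \<alpha> (br x z) y - \<alpha> (br y z) x"

definition closed2 :: "(vec4 \<Rightarrow> vec4 \<Rightarrow> vec4) \<Rightarrow> (vec4 \<Rightarrow> vec4 \<Rightarrow> real) \<Rightarrow> bool" where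
  "closed2 br \<alpha> \<longleftrightarrow> (\<forall>x y z. d2 br \<alpha> x y z = 0)"

definition nondegenerate2 :: "(vec4 \<Rightarrow> vec4 \<Rightarrow> real) \<Rightarrow> bool" where
  "nondegenerate2 \<omega> \<longleftrightarrow> (\<forall>v. v \<noteq> 0 \<longrightarrow> (\<exists>w. \<omega> v w \<noteq> 0))"

definition symplectic :: "(vec4 \<Rightarrow> vec4 \<Rightarrow> vec4) \<Rightarrow> (vec4 \<Rightarrow> vec4 \<Rightarrow> real) \<Rightarrow> bool" where
  "symplectic br \<omega> \<longleftrightarrow> form2 \<omega> \<and> closed2 br \<omega> \<and> nondegenerate2 \<omega>"

definition form4 :: "(vec4 \<Rightarrow> vec4 \<Rightarrow> vec4 \<Rightarrow> vec4 \<Rightarrow> real) \<Rightarrow> bool" where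
  "form4 \<mu> \<longleftrightarrow>
     (\<forall>b c d. linear (\<lambda>a. \<mu> a b c d)) \<and> (\<forall>a c d. linear (\<lambda>b. \<mu> a b c d)) \<and>
     (\<forall>a b d. linear (\<lambda>c. \<mu> a b c d)) \<and> (\<forall>a b c. linear (\<lambda>d. \<mu> a b c d)) \<and>
     (\<forall>a b c d. (a = b \<or> a = c \<or> a = d \<or> b = c \<or> b = d \<or> c = d) \<longrightarrow> \<mu> a b c d = 0)"

definition volume_form :: "(vec4 \<Rightarrow> vec4 \<Rightarrow> vec4 \<Rightarrow> vec4 \<Rightarrow> real) \<Rightarrow> bool" where
  "volume_form \<mu> \<longleftrightarrow> form4 \<mu> \<and> (\<exists>a b c d. \<mu> a b c d \<noteq> 0)"

definition wedge22 :: "(vec4 \<Rightarrow> vec4 \<Rightarrow> real) \<Rightarrow> (vec4 \<Rightarrow> vec4 \<Rightarrow> real) \<Rightarrow> vec4 \<Rightarrow> vec4 \<Rightarrow> vec4 \<Rightarrow> vec4 \<Rightarrow> real" where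
  "wedge22 \<alpha> \<beta> v1 v2 v3 v4 =
      \<alpha> v1 v2 * \<beta> v3 v4 - \<alpha> v1 v3 * \<beta> v2 v4 + \<alpha> v1 v4 * \<beta> v2 v3
    + \<alpha> v3 v4 * \<beta> v1 v2 - \<alpha> v2 v4 * \<beta> v1 v3 + \<alpha> v2 v3 * \<beta> v1 v4"

definition positively_oriented_symplectic ::
  "(vec4 \<Rightarrow> vec4 \<Rightarrow> vec4) \<Rightarrow> (vec4 \<Rightarrow> vec4 \<Rightarrow> vec4 \<Rightarrow> vec4 \<Rightarrow> real) \<Rightarrow> (vec4 \<Rightarrow> vec4 \<Rightarrow> real) \<Rightarrow> bool" where
  "positively_oriented_symplectic br \<mu> \<omega> \<longleftrightarrow> symplectic br \<omega> \<and>
     (\<exists>c>0. \<forall>v1 v2 v3 v4. wedge22 \<omega> \<omega> v1 v2 v3 v4 = c * \<mu> v1 v2 v3 v4)"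

definition almost_complex :: "(vec4 \<Rightarrow> vec4) \<Rightarrow> bool" where
  "almost_complex J \<longleftrightarrow> linear J \<and> (\<forall>v. J (J v) = - v)"

definition induces_orientation :: "(vec4 \<Rightarrow> vec4 \<Rightarrow> vec4 \<Rightarrow> vec4 \<Rightarrow> real) \<Rightarrow> (vec4 \<Rightarrow> vec4) \<Rightarrow> bool" where
  "induces_orientation \<mu> J \<longleftrightarrow>
     (\<exists>v1 v2. independent {v1, J v1, v2, J v2} \<and> card {v1, J v1, v2, J v2} = 4
            \<and> \<mu> v1 (J v1) v2 (J v2) > 0)"

definition tamed :: "(vec4 \<Rightarrow> vec4 \<Rightarrow> real) \<Rightarrow> (vec4 \<Rightarrow> vec4) \<Rightarrow> bool" where
  "tamed \<omega> J \<longleftrightarrow> (\<forall>u. u \<noteq> 0 \<longrightarrow> \<omega> u (J u) > 0)"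

definition compatible :: "(vec4 \<Rightarrow> vec4 \<Rightarrow> real) \<Rightarrow> (vec4 \<Rightarrow> vec4) \<Rightarrow> bool" where
  "compatible \<omega> J \<longleftrightarrow> tamed \<omega> J \<and> (\<forall>v w. \<omega> (J v) (J w) = \<omega> v w)"

definition tame_compatible ::
  "(vec4 \<Rightarrow> vec4 \<Rightarrow> vec4) \<Rightarrow> (vec4 \<Rightarrow> vec4 \<Rightarrow> vec4 \<Rightarrow> vec4 \<Rightarrow> real) \<Rightarrow> bool" where
  "tame_compatible br \<mu> \<longleftrightarrow>
     (\<forall>J. almost_complex J \<and> induces_orientation \<mu> J \<and> (\<exists>\<omega>. symplectic br \<omega> \<and> tamed \<omega> J)
          \<longrightarrow> (\<exists>\<omega>. symplectic br \<omega> \<and> compatible \<omega> J))"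

text \<open>2-vectors: every element of Lambda^2(g) is a finite sum of decomposables
  a_1 /\ b_1 + ... + a_k /\ b_k; we represent it by the list of pairs (a_i,b_i).
  All quantities below only depend on the represented 2-vector.\<close>
type_synonym twovec = "(vec4 \<times> vec4) list"

definition pair2 :: "(vec4 \<Rightarrow> vec4 \<Rightarrow> real) \<Rightarrow> twovec \<Rightarrow> real" where
  "pair2 \<alpha> u = (\<Sum>(a,b)\<leftarrow>u. \<alpha> a b)"

definition boundary2 :: "(vec4 \<Rightarrow> vec4 \<Rightarrow> vec4) \<Rightarrow> twovec \<Rightarrow> bool" where
  "boundary2 br u \<longleftrightarrow> (\<forall>\<alpha>. form2 \<alpha> \<and> closed2 br \<alpha> \<longrightarrow> pair2 \<alpha> u = 0)"

definition Phi :: "(vec4 \<Rightarrow> vec4 \<Rightarrow> vec4 \<Rightarrow> vec4 \<Rightarrow> real) \<Rightarrow> twovec \<Rightarrow> twovec \<Rightarrow> real" where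
  "Phi \<mu> u v = (\<Sum>(a,b)\<leftarrow>u. \<Sum>(c,d)\<leftarrow>v. \<mu> a b c d)"

end

theory Submission
  imports Defs
begin

lemma form2_antisym: assumes "form2 \<alpha>" shows "\<alpha> y x = - \<alpha> x y"
proof -
  have b: "bilinear \<alpha>" and z: "\<And>x. \<alpha> x x = 0" using assms unfolding form2_def by auto
  have "\<alpha> (x+y) (x+y) = 0" using z by simp
  hence "\<alpha> x x + \<alpha> x y + \<alpha> y x + \<alpha> y y = 0"
    using bilinear_ladd[OF b] bilinear_radd[OF b] by (simp add: algebra_simps)
  thus ?thesis using z by simp
qed

lemma vector_4 [simp]:
  "(vector[a,b,c,d] :: 'a::zero^4) $ 1 = a" "(vector[a,b,c,d] :: 'a::zero^4) $ 2 = b"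
  "(vector[a,b,c,d] :: 'a::zero^4) $ 3 = c" "(vector[a,b,c,d] :: 'a::zero^4) $ 4 = d"
  by (simp_all add: vector_def)

lemma coords4:
  fixes e1 e2 e3 e4 :: vec4
  assumes ind: "independent {e1,e2,e3,e4}" and card: "card {e1,e2,e3,e4} = 4"
  shows "\<exists>c1 c2 c3 c4. linear c1 \<and> linear c2 \<and> linear c3 \<and> linear c4 \<and>
     (\<forall>x. x = c1 x *\<^sub>R e1 + c2 x *\<^sub>R e2 + c3 x *\<^sub>R e3 + c4 x *\<^sub>R e4) \<and>
     c1 e1 = 1 \<and> c2 e1 = 0 \<and> c3 e1 = 0 \<and> c4 e1 = 0 \<and>
     c1 e2 = 0 \<and> c2 e2 = 1 \<and> c3 e2 = 0 \<and> c4 e2 = 0 \<and>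
     c1 e3 = 0 \<and> c2 e3 = 0 \<and> c3 e3 = 1 \<and> c4 e3 = 0 \<and>
     c1 e4 = 0 \<and> c2 e4 = 0 \<and> c3 e4 = 0 \<and> c4 e4 = 1"
proof -
  define T where "T = (\<lambda>c::real^4. c$1 *\<^sub>R e1 + c$2 *\<^sub>R e2 + c$3 *\<^sub>R e3 + c$4 *\<^sub>R e4)"
  have linT: "linear T" unfolding T_def
    by (auto intro!: linearI simp: algebra_simps)
  have sp: "UNIV \<subseteq> span {e1,e2,e3,e4}"
    using card_eq_dim[of "{e1,e2,e3,e4}" UNIV] ind card by simp
  have dist: "e1 \<noteq> e2" "e1 \<noteq> e3" "e1 \<noteq> e4" "e2 \<noteq> e3" "e2 \<noteq> e4" "e3 \<noteq> e4"
    using card by (auto simp: card_insert_if split: if_splits)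
  have surjT: "surj T"
  proof -
    { fix x
      have "x \<in> span {e1,e2,e3,e4}" using sp by auto
      then obtain u where "x = (\<Sum>v\<in>{e1,e2,e3,e4}. u v *\<^sub>R v)"
        unfolding span_finite[OF finite.insertI[OF finite.insertI[OF finite.insertI[OF finite.insertI[OF finite.emptyI]]]]] by auto
      hence "x = u e1 *\<^sub>R e1 + u e2 *\<^sub>R e2 + u e3 *\<^sub>R e3 + u e4 *\<^sub>R e4"
        using dist by (simp add: add.assoc)
      hence "x = T (vector [u e1, u e2, u e3, u e4])" unfolding T_def by simp
      hence "x \<in> range T" by blast }
    thus ?thesis by auto
  qed
  have injT: "inj T" using linear_surjective_imp_injective[OF linT surjT] by simp
  obtain g where lg: "linear g" and gT: "T \<circ> g = id"
    using linear_surjective_right_inverse[OF linT surjT] by blast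
  have Tg: "\<And>x. T (g x) = x" using gT by (metis comp_apply id_apply)
  have gax: "g (T c) = c" for c using injT Tg by (metis injD)
  have g1: "g e1 = vector [1,0,0,0]" using gax[of "vector [1,0,0,0]"] unfolding T_def by simp
  have g2: "g e2 = vector [0,1,0,0]" using gax[of "vector [0,1,0,0]"] unfolding T_def by simp
  have g3: "g e3 = vector [0,0,1,0]" using gax[of "vector [0,0,1,0]"] unfolding T_def by simp
  have g4: "g e4 = vector [0,0,0,1]" using gax[of "vector [0,0,0,1]"] unfolding T_def by simp
  have lc: "linear (\<lambda>x. g x $ i)" for i
    using lg by (auto intro!: linearI simp: linear_add linear_scale)
  show ?thesis
    apply (rule exI[of _ "\<lambda>x. g x $ 1"], rule exI[of _ "\<lambda>x. g x $ 2"],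
           rule exI[of _ "\<lambda>x. g x $ 3"], rule exI[of _ "\<lambda>x. g x $ 4"])
    using lc Tg g1 g2 g3 g4 unfolding T_def by auto
qed


lemma form2_L0:
  assumes f: "form2 \<alpha>"
  shows "\<alpha> (x1 *\<^sub>R e1 + x2 *\<^sub>R e2 + x3 *\<^sub>R e3 + x4 *\<^sub>R e4) (y1 *\<^sub>R e1 + y2 *\<^sub>R e2 + y3 *\<^sub>R e3 + y4 *\<^sub>R e4)
   = (x1*y2 - x2*y1) * \<alpha> e1 e2 + (x1*y3 - x3*y1) * \<alpha> e1 e3 + (x1*y4 - x4*y1) * \<alpha> e1 e4
   + (x2*y3 - x3*y2) * \<alpha> e2 e3 + (x2*y4 - x4*y2) * \<alpha> e2 e4 + (x3*y4 - x4*y3) * \<alpha> e3 e4"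
proof -
  have b: "bilinear \<alpha>" and z: "\<And>x. \<alpha> x x = 0" using f unfolding form2_def by auto
  note as = form2_antisym[OF f]
  have a: "\<alpha> e2 e1 = - \<alpha> e1 e2" "\<alpha> e3 e1 = - \<alpha> e1 e3" "\<alpha> e4 e1 = - \<alpha> e1 e4"
       "\<alpha> e3 e2 = - \<alpha> e2 e3" "\<alpha> e4 e2 = - \<alpha> e2 e4" "\<alpha> e4 e3 = - \<alpha> e3 e4" by (rule as)+
  note ex = bilinear_ladd[OF b] bilinear_radd[OF b] bilinear_lmul[OF b] bilinear_rmul[OF b]
  show ?thesis
    apply (simp only: ex real_scaleR_def a z)
    apply (simp add: algebra_simps)
    done
qed
definition cU :: "(vec4 \<Rightarrow> real) \<Rightarrow> (vec4 \<Rightarrow> real) \<Rightarrow> twovec \<Rightarrow> real" where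
  "cU ci cj u = (\<Sum>(a,b)\<leftarrow>u. ci a * cj b - cj a * ci b)"

lemma cU_simps [simp]: "cU ci cj [] = 0" "cU ci cj ((a,b)#u) = (ci a * cj b - cj a * ci b) + cU ci cj u"
  by (simp_all add: cU_def)

lemma pair2_simps [simp]: "pair2 \<alpha> [] = 0" "pair2 \<alpha> ((a,b)#u) = \<alpha> a b + pair2 \<alpha> u"
  by (simp_all add: pair2_def)

lemma pair2_expand:
  assumes f: "form2 \<alpha>" and B: "\<forall>x. x = c1 x *\<^sub>R e1 + c2 x *\<^sub>R e2 + c3 x *\<^sub>R e3 + c4 x *\<^sub>R e4"
  shows "pair2 \<alpha> u = cU c1 c2 u * \<alpha> e1 e2 + cU c1 c3 u * \<alpha> e1 e3 + cU c1 c4 u * \<alpha> e1 e4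
     + cU c2 c3 u * \<alpha> e2 e3 + cU c2 c4 u * \<alpha> e2 e4 + cU c3 c4 u * \<alpha> e3 e4"
proof (induction u)
  case Nil then show ?case by simp
next
  case (Cons p u)
  obtain a b where p: "p = (a,b)" by force
  have "\<alpha> a b = \<alpha> (c1 a *\<^sub>R e1 + c2 a *\<^sub>R e2 + c3 a *\<^sub>R e3 + c4 a *\<^sub>R e4) (c1 b *\<^sub>R e1 + c2 b *\<^sub>R e2 + c3 b *\<^sub>R e3 + c4 b *\<^sub>R e4)"
    using B[rule_format, of a] B[rule_format, of b] by simp
  also have "\<dots> = (c1 a * c2 b - c2 a * c1 b) * \<alpha> e1 e2 + (c1 a * c3 b - c3 a * c1 b) * \<alpha> e1 e3 + (c1 a * c4 b - c4 a * c1 b) * \<alpha> e1 e4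
   + (c2 a * c3 b - c3 a * c2 b) * \<alpha> e2 e3 + (c2 a * c4 b - c4 a * c2 b) * \<alpha> e2 e4 + (c3 a * c4 b - c4 a * c3 b) * \<alpha> e3 e4"
    by (rule form2_L0[OF f])
  finally show ?case using Cons p by (simp add: algebra_simps)
qed

lemma form4_parts:
  assumes "form4 \<mu>"
  shows "linear (\<lambda>a. \<mu> a b c d)" "linear (\<lambda>b. \<mu> a b c d)" "linear (\<lambda>c. \<mu> a b c d)" "linear (\<lambda>d. \<mu> a b c d)"
   and "\<mu> a a c d = 0" "\<mu> a b b d = 0" "\<mu> a b c c = 0" "\<mu> a b a d = 0" "\<mu> a b c a = 0" "\<mu> a b c b = 0"
  using assms unfolding form4_def by simp_all

lemma form4_slices:
  assumes "form4 \<mu>"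
  shows "form2 (\<lambda>a b. \<mu> a b c d)" "form2 (\<lambda>b c. \<mu> a b c d)" "form2 (\<lambda>c d. \<mu> a b c d)"
        "form2 (\<lambda>a c. \<mu> a b c d)" "form2 (\<lambda>a d. \<mu> a b c d)" "form2 (\<lambda>b d. \<mu> a b c d)"
  unfolding form2_def bilinear_def using form4_parts[OF assms] by simp_all

lemma form4_swaps:
  assumes "form4 \<mu>"
  shows "\<mu> b a c d = - \<mu> a b c d" "\<mu> a c b d = - \<mu> a b c d" "\<mu> a b d c = - \<mu> a b c d"
proof -
  show "\<mu> b a c d = - \<mu> a b c d" using form2_antisym[OF form4_slices(1)[OF assms, of c d], of b a] by simp
  show "\<mu> a c b d = - \<mu> a b c d" using form2_antisym[OF form4_slices(2)[OF assms, of a d], of c b] by simp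
  show "\<mu> a b d c = - \<mu> a b c d" using form2_antisym[OF form4_slices(3)[OF assms, of a b], of d c] by simp
qed


lemma form4_perms:
  assumes "form4 \<mu>"
  shows "\<mu> c d a b = \<mu> a b c d" "\<mu> a c b d = - \<mu> a b c d" "\<mu> b d a c = - \<mu> a b c d"
        "\<mu> a d b c = \<mu> a b c d" "\<mu> b c a d = \<mu> a b c d"
proof -
  note s = form4_swaps[OF assms]
  have "\<mu> c d a b = - \<mu> c a d b" using s(2)[of c a d b] by simp
  also have "\<dots> = \<mu> a c d b" using s(1)[of a c d b] by simp
  also have "\<dots> = - \<mu> a c b d" using s(3)[of a c b d] by simp
  also have "\<dots> = \<mu> a b c d" using s(2)[of a b c d] by simp
  finally show "\<mu> c d a b = \<mu> a b c d" .
  show "\<mu> a c b d = - \<mu> a b c d" by (rule s(2))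
  have "\<mu> b d a c = - \<mu> b a d c" using s(2)[of b a d c] by simp
  also have "\<dots> = \<mu> a b d c" using s(1)[of a b d c] by simp
  also have "\<dots> = - \<mu> a b c d" using s(3)[of a b c d] by simp
  finally show "\<mu> b d a c = - \<mu> a b c d" .
  have "\<mu> a d b c = - \<mu> a b d c" using s(2)[of a b d c] by simp
  also have "\<dots> = \<mu> a b c d" using s(3)[of a b c d] by simp
  finally show "\<mu> a d b c = \<mu> a b c d" .
  have "\<mu> b c a d = - \<mu> b a c d" using s(2)[of b a c d] by simp
  also have "\<dots> = \<mu> a b c d" using s(1)[of a b c d] by simp
  finally show "\<mu> b c a d = \<mu> a b c d" .
qed

definition crd :: "vec4 \<Rightarrow> vec4 \<Rightarrow> vec4 \<Rightarrow> vec4 \<Rightarrow> (vec4 \<Rightarrow> real) \<Rightarrow> (vec4 \<Rightarrow> real) \<Rightarrow> (vec4 \<Rightarrow> real) \<Rightarrow> (vec4 \<Rightarrow> real) \<Rightarrow> bool" where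
  "crd e1 e2 e3 e4 c1 c2 c3 c4 \<longleftrightarrow> (\<forall>x. x = c1 x *\<^sub>R e1 + c2 x *\<^sub>R e2 + c3 x *\<^sub>R e3 + c4 x *\<^sub>R e4)"

lemma pair2_slices:
  assumes m4: "form4 \<mu>" and B: "crd e1 e2 e3 e4 c1 c2 c3 c4" and m: "\<mu> e1 e2 e3 e4 = m"
  shows "pair2 (\<lambda>a b. \<mu> a b e1 e2) u = m * cU c3 c4 u"
        "pair2 (\<lambda>a b. \<mu> a b e1 e3) u = - m * cU c2 c4 u"
        "pair2 (\<lambda>a b. \<mu> a b e1 e4) u = m * cU c2 c3 u"
        "pair2 (\<lambda>a b. \<mu> a b e2 e3) u = m * cU c1 c4 u"
        "pair2 (\<lambda>a b. \<mu> a b e2 e4) u = - m * cU c1 c3 u"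
        "pair2 (\<lambda>a b. \<mu> a b e3 e4) u = m * cU c1 c2 u"
proof -
  have P: "\<mu> e3 e4 e1 e2 = m" "\<mu> e1 e3 e2 e4 = - m" "\<mu> e2 e4 e1 e3 = - m" "\<mu> e1 e4 e2 e3 = m" "\<mu> e2 e3 e1 e4 = m"
    using form4_perms[OF m4, where a=e1 and b=e2 and c=e3 and d=e4] m by simp_all
  note Z = form4_parts(5-10)[OF m4]
  note E = pair2_expand[OF form4_slices(1)[OF m4] B[unfolded crd_def]]
  show "pair2 (\<lambda>a b. \<mu> a b e1 e2) u = m * cU c3 c4 u"
        "pair2 (\<lambda>a b. \<mu> a b e1 e3) u = - m * cU c2 c4 u"
        "pair2 (\<lambda>a b. \<mu> a b e1 e4) u = m * cU c2 c3 u"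
        "pair2 (\<lambda>a b. \<mu> a b e2 e3) u = m * cU c1 c4 u"
        "pair2 (\<lambda>a b. \<mu> a b e2 e4) u = - m * cU c1 c3 u"
        "pair2 (\<lambda>a b. \<mu> a b e3 e4) u = m * cU c1 c2 u"
    unfolding E by (simp_all add: Z P m)
qed

lemma sum_list_lin6:
  "(\<Sum>(a,b)\<leftarrow>u. k1 * f1 a b + k2 * f2 a b + k3 * f3 a b + k4 * f4 a b + k5 * f5 a b + k6 * f6 a b)
   = k1 * pair2 f1 u + k2 * pair2 f2 u + k3 * pair2 f3 u + k4 * pair2 f4 u + k5 * pair2 f5 u + k6 * pair2 f6 u"
  by (induction u) (auto simp: algebra_simps)

lemma Phi_expand:
  assumes m4: "form4 \<mu>" and B: "crd e1 e2 e3 e4 c1 c2 c3 c4"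
  shows "Phi \<mu> u v = \<mu> e1 e2 e3 e4 * (cU c1 c2 v * cU c3 c4 u - cU c1 c3 v * cU c2 c4 u + cU c1 c4 v * cU c2 c3 u
     + cU c2 c3 v * cU c1 c4 u - cU c2 c4 v * cU c1 c3 u + cU c3 c4 v * cU c1 c2 u)"
proof -
  have "Phi \<mu> u v = (\<Sum>(a,b)\<leftarrow>u. pair2 (\<lambda>c d. \<mu> a b c d) v)"
    unfolding Phi_def pair2_def by simp
  also have "\<dots> = (\<Sum>(a,b)\<leftarrow>u. cU c1 c2 v * \<mu> a b e1 e2 + cU c1 c3 v * \<mu> a b e1 e3 + cU c1 c4 v * \<mu> a b e1 e4
     + cU c2 c3 v * \<mu> a b e2 e3 + cU c2 c4 v * \<mu> a b e2 e4 + cU c3 c4 v * \<mu> a b e3 e4)"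
    using pair2_expand[OF form4_slices(3)[OF m4] B[unfolded crd_def]]
    by (intro arg_cong[where f=sum_list] map_cong) auto
  also have "\<dots> = cU c1 c2 v * pair2 (\<lambda>a b. \<mu> a b e1 e2) u + cU c1 c3 v * pair2 (\<lambda>a b. \<mu> a b e1 e3) u
     + cU c1 c4 v * pair2 (\<lambda>a b. \<mu> a b e1 e4) u + cU c2 c3 v * pair2 (\<lambda>a b. \<mu> a b e2 e3) u
     + cU c2 c4 v * pair2 (\<lambda>a b. \<mu> a b e2 e4) u + cU c3 c4 v * pair2 (\<lambda>a b. \<mu> a b e3 e4) u"
    by (rule sum_list_lin6)
  finally show ?thesis using pair2_slices[OF m4 B refl] by (simp add: algebra_simps)
qed

abbreviation "ax i \<equiv> (axis i 1 :: vec4)"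

lemma std_crd: "crd (ax 1) (ax 2) (ax 3) (ax 4) (\<lambda>x. x$1) (\<lambda>x. x$2) (\<lambda>x. x$3) (\<lambda>x. x$4)"
  unfolding crd_def by (simp add: vec_eq_iff forall_4 axis_def)

lemma std_expand:
  assumes "form2 \<alpha>"
  shows "\<alpha> x y = (x$1*y$2 - x$2*y$1) * \<alpha> (ax 1) (ax 2) + (x$1*y$3 - x$3*y$1) * \<alpha> (ax 1) (ax 3)
    + (x$1*y$4 - x$4*y$1) * \<alpha> (ax 1) (ax 4) + (x$2*y$3 - x$3*y$2) * \<alpha> (ax 2) (ax 3)
    + (x$2*y$4 - x$4*y$2) * \<alpha> (ax 2) (ax 4) + (x$3*y$4 - x$4*y$3) * \<alpha> (ax 3) (ax 4)"
proof -
  have "\<alpha> x y = \<alpha> (x$1 *\<^sub>R ax 1 + x$2 *\<^sub>R ax 2 + x$3 *\<^sub>R ax 3 + x$4 *\<^sub>R ax 4) (y$1 *\<^sub>R ax 1 + y$2 *\<^sub>R ax 2 + y$3 *\<^sub>R ax 3 + y$4 *\<^sub>R ax 4)"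
    using std_crd unfolding crd_def by metis
  thus ?thesis using form2_L0[OF assms] by simp
qed

definition Mk :: "real \<Rightarrow> real \<Rightarrow> real \<Rightarrow> real \<Rightarrow> real \<Rightarrow> real \<Rightarrow> real \<Rightarrow> real \<Rightarrow> real \<Rightarrow> real \<Rightarrow> real \<Rightarrow> real \<Rightarrow> vec4 \<Rightarrow> vec4" where
  "Mk a b c d e f W12 W13 W14 W23 W24 W34 x = vector [
    (f*W12 - e*W13 + d*W14) * x$1 + (- e*W23 + d*W24) * x$2 + (- f*W23 + d*W34) * x$3 + (- f*W24 + e*W34) * x$4,
    (c*W13 - b*W14) * x$1 + (f*W12 + c*W23 - b*W24) * x$2 + (f*W13 - b*W34) * x$3 + (f*W14 - c*W34) * x$4,
    (- c*W12 + a*W14) * x$1 + (- e*W12 + a*W24) * x$2 + (- e*W13 + c*W23 + a*W34) * x$3 + (- e*W14 + c*W24) * x$4,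
    (b*W12 - a*W13) * x$1 + (d*W12 - a*W23) * x$2 + (d*W13 - b*W23) * x$3 + (d*W14 - b*W24 + a*W34) * x$4]"

lemma Mk_comp [simp]:
  "Mk a b c d e f W12 W13 W14 W23 W24 W34 x $ 1 = (f*W12 - e*W13 + d*W14) * x$1 + (- e*W23 + d*W24) * x$2 + (- f*W23 + d*W34) * x$3 + (- f*W24 + e*W34) * x$4"
  "Mk a b c d e f W12 W13 W14 W23 W24 W34 x $ 2 = (c*W13 - b*W14) * x$1 + (f*W12 + c*W23 - b*W24) * x$2 + (f*W13 - b*W34) * x$3 + (f*W14 - c*W34) * x$4"
  "Mk a b c d e f W12 W13 W14 W23 W24 W34 x $ 3 = (- c*W12 + a*W14) * x$1 + (- e*W12 + a*W24) * x$2 + (- e*W13 + c*W23 + a*W34) * x$3 + (- e*W14 + c*W24) * x$4"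
  "Mk a b c d e f W12 W13 W14 W23 W24 W34 x $ 4 = (b*W12 - a*W13) * x$1 + (d*W12 - a*W23) * x$2 + (d*W13 - b*W23) * x$3 + (d*W14 - b*W24 + a*W34) * x$4"
  unfolding Mk_def by simp_all

lemma Mk_linear: "linear (Mk a b c d e f W12 W13 W14 W23 W24 W34)"
  by (intro linearI) (simp_all add: vec_eq_iff forall_4 algebra_simps)

lemma Mk_omega:
  fixes x y :: vec4 and a b c d e f W12 W13 W14 W23 W24 W34 :: real
  defines "M \<equiv> Mk a b c d e f W12 W13 W14 W23 W24 W34 x"
  shows "(M$1*y$2 - M$2*y$1) * a + (M$1*y$3 - M$3*y$1) * b + (M$1*y$4 - M$4*y$1) * c
    + (M$2*y$3 - M$3*y$2) * d + (M$2*y$4 - M$4*y$2) * e + (M$3*y$4 - M$4*y$3) * f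
    = (a*f - b*e + c*d) * ((x$1*y$2 - x$2*y$1) * W12 + (x$1*y$3 - x$3*y$1) * W13 + (x$1*y$4 - x$4*y$1) * W14
    + (x$2*y$3 - x$3*y$2) * W23 + (x$2*y$4 - x$4*y$2) * W24 + (x$3*y$4 - x$4*y$3) * W34)"
  unfolding M_def by (simp add: algebra_simps)

lemma Mk_sq:
  assumes H: "a*W34 + f*W12 - b*W24 - e*W13 + c*W23 + d*W14 = 0"
  shows "Mk a b c d e f W12 W13 W14 W23 W24 W34 (Mk a b c d e f W12 W13 W14 W23 W24 W34 x)
     = (- ((a*f - b*e + c*d) * (W12*W34 - W13*W24 + W14*W23))) *\<^sub>R x"
proof -
  let ?H = "a*W34 + f*W12 - b*W24 - e*W13 + c*W23 + d*W14"
  have "Mk a b c d e f W12 W13 W14 W23 W24 W34 (Mk a b c d e f W12 W13 W14 W23 W24 W34 x)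
     = (- ((a*f - b*e + c*d) * (W12*W34 - W13*W24 + W14*W23))) *\<^sub>R x + ?H *\<^sub>R Mk a b c d e f W12 W13 W14 W23 W24 W34 x"
    by (simp add: vec_eq_iff forall_4 algebra_simps)
  thus ?thesis using H by simp
qed

lemma form2_lin:
  assumes "form2 \<alpha>"
  shows "\<alpha> (x + y) z = \<alpha> x z + \<alpha> y z" "\<alpha> z (x + y) = \<alpha> z x + \<alpha> z y"
    "\<alpha> (k *\<^sub>R x) z = k * \<alpha> x z" "\<alpha> z (k *\<^sub>R x) = k * \<alpha> z x"
    "\<alpha> (- x) z = - \<alpha> x z" "\<alpha> z (- x) = - \<alpha> z x"
    "\<alpha> (x - y) z = \<alpha> x z - \<alpha> y z" "\<alpha> z (x - y) = \<alpha> z x - \<alpha> z y"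
  using assms unfolding form2_def
  by (simp_all add: bilinear_ladd bilinear_radd bilinear_lmul bilinear_rmul bilinear_lneg bilinear_rneg
      bilinear_lsub bilinear_rsub)

lemma darboux_from_I:
  fixes \<omega> w :: "vec4 \<Rightarrow> vec4 \<Rightarrow> real" and I :: "vec4 \<Rightarrow> vec4"
  assumes f\<omega>: "form2 \<omega>" and nd: "nondegenerate2 \<omega>" and fw: "form2 w"
    and lI: "linear I" and II: "\<And>x. I (I x) = - x"
    and wI: "\<And>x y. w x y = lm * \<omega> (I x) y" and lam: "lm > 0"
  shows "\<exists>b1 b2 b3 b4. \<omega> b1 b2 = 1 \<and> \<omega> b1 b3 = 0 \<and> \<omega> b1 b4 = 0 \<and> \<omega> b2 b3 = 0 \<and> \<omega> b2 b4 = 0 \<and> \<omega> b3 b4 = 1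
     \<and> w b1 b2 = 0 \<and> w b1 b3 = - lm \<and> w b1 b4 = 0 \<and> w b2 b3 = 0 \<and> w b2 b4 = lm \<and> w b3 b4 = 0"
proof -
  note L = form2_lin[OF f\<omega>]
  note as = form2_antisym[OF f\<omega>]
  have SA: "\<omega> (I x) y = \<omega> x (I y)" for x y
  proof -
    have "lm * \<omega> (I x) y = w x y" using wI by simp
    also have "\<dots> = - w y x" using form2_antisym[OF fw, of x y] by simp
    also have "\<dots> = - (lm * \<omega> (I y) x)" using wI by simp
    also have "\<dots> = lm * \<omega> x (I y)" using as[of "I y" x] by simp
    finally show ?thesis using lam by simp
  qed
  have D: "\<omega> x x = 0" for x using f\<omega> unfolding form2_def by simp
  have N: "\<omega> (I x) (I y) = - \<omega> x y" for x y using SA[of x "I y"] II[of y] L(6)[of x y] by simp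
  have Z: "\<omega> x (I x) = 0" for x using SA[of x x] as[of "I x" x] by simp
  define v :: vec4 where "v = axis 1 1"
  have "v \<noteq> 0" unfolding v_def by (simp add: axis_eq_0_iff)
  then obtain z where z: "\<omega> v z \<noteq> 0" using nd unfolding nondegenerate2_def by blast
  define p where "p = \<omega> v z"
  define q where "q = \<omega> (I v) z"
  define r where "r = p*p + q*q"
  have "p * p > 0" using z unfolding p_def by (metis not_real_square_gt_zero)
  hence r: "r > 0" unfolding r_def by (metis add_pos_nonneg zero_le_square)
  define y where "y = (1/r) *\<^sub>R (p *\<^sub>R z + q *\<^sub>R I z)"
  have vIz: "\<omega> v (I z) = q" unfolding q_def using SA[of v z] by simp
  have IvIz: "\<omega> (I v) (I z) = - p" unfolding p_def using N by simp
  have r0: "p*p+q*q \<noteq> 0" using r unfolding r_def by linarith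
  have vy: "\<omega> v y = 1" unfolding y_def using r0 by (simp add: L vIz p_def[symmetric] r_def)
  have Ivy: "\<omega> (I v) y = 0" unfolding y_def using r by (simp add: L IvIz q_def[symmetric] algebra_simps)
  show ?thesis
  proof (intro exI conjI)
    show "\<omega> v y = 1" by (rule vy)
    show "\<omega> v (I y) = 0" using SA[of v y] Ivy by simp
    show "\<omega> v (I v) = 0" by (rule Z)
    show "\<omega> y (I y) = 0" by (rule Z)
    show "\<omega> y (I v) = 0" using as[of "I v" y] Ivy by simp
    show "\<omega> (I y) (I v) = 1" using N[of y v] as[of y v] vy by simp
    show "w v y = 0" using wI Ivy by simp
    show "w v (I y) = - lm" using wI N[of v y] vy by simp
    show "w v (I v) = 0" using wI N[of v v] D by simp
    show "w y (I y) = 0" using wI N[of y y] D by simp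
    show "w y (I v) = lm" using wI N[of y v] as[of y v] vy by simp
    have "\<omega> y (I v) = 0" using as[of "I v" y] Ivy by simp
    thus "w (I y) (I v) = 0" using wI II[of y] L(5)[of y "I v"] by simp
  qed
qed

lemma coeff_indep:
  fixes b1 b2 b3 b4 :: vec4
  assumes H: "\<And>u1 u2 u3 u4. u1 *\<^sub>R b1 + u2 *\<^sub>R b2 + u3 *\<^sub>R b3 + u4 *\<^sub>R b4 = 0 \<Longrightarrow> u1 = 0 \<and> u2 = 0 \<and> u3 = 0 \<and> u4 = 0"
  shows "independent {b1,b2,b3,b4}" "card {b1,b2,b3,b4} = 4"
proof -
  have d12: "b1 \<noteq> b2" using H[of 1 "-1" 0 0] by auto
  have d13: "b1 \<noteq> b3" using H[of 1 0 "-1" 0] by auto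
  have d14: "b1 \<noteq> b4" using H[of 1 0 0 "-1"] by auto
  have d23: "b2 \<noteq> b3" using H[of 0 1 "-1" 0] by auto
  have d24: "b2 \<noteq> b4" using H[of 0 1 0 "-1"] by auto
  have d34: "b3 \<noteq> b4" using H[of 0 0 1 "-1"] by auto
  show "card {b1,b2,b3,b4} = 4" using d12 d13 d14 d23 d24 d34 by simp
  show "independent {b1,b2,b3,b4}"
  proof
    assume "dependent {b1,b2,b3,b4}"
    then obtain u where u: "\<exists>v\<in>{b1,b2,b3,b4}. u v \<noteq> 0" and s: "(\<Sum>v\<in>{b1,b2,b3,b4}. u v *\<^sub>R v) = 0"
      using dependent_finite[of "{b1,b2,b3,b4}"] by auto
    have "u b1 *\<^sub>R b1 + u b2 *\<^sub>R b2 + u b3 *\<^sub>R b3 + u b4 *\<^sub>R b4 = 0"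
      using s d12 d13 d14 d23 d24 d34 by (simp add: add.assoc)
    from H[OF this] u show False by auto
  qed
qed

lemma crd_coord:
  assumes l: "linear c1" "linear c2" "linear c3" "linear c4"
    and d: "c1 e1 = 1" "c2 e1 = 0" "c3 e1 = 0" "c4 e1 = 0"
     "c1 e2 = 0" "c2 e2 = 1" "c3 e2 = 0" "c4 e2 = 0"
     "c1 e3 = 0" "c2 e3 = 0" "c3 e3 = 1" "c4 e3 = 0"
     "c1 e4 = 0" "c2 e4 = 0" "c3 e4 = 0" "c4 e4 = 1"
  shows "c1 (y1 *\<^sub>R e1 + y2 *\<^sub>R e2 + y3 *\<^sub>R e3 + y4 *\<^sub>R e4) = y1"
        "c2 (y1 *\<^sub>R e1 + y2 *\<^sub>R e2 + y3 *\<^sub>R e3 + y4 *\<^sub>R e4) = y2"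
        "c3 (y1 *\<^sub>R e1 + y2 *\<^sub>R e2 + y3 *\<^sub>R e3 + y4 *\<^sub>R e4) = y3"
        "c4 (y1 *\<^sub>R e1 + y2 *\<^sub>R e2 + y3 *\<^sub>R e3 + y4 *\<^sub>R e4) = y4"
  using l d by (simp_all add: linear_add linear_scale)

lemma form4_lin24:
  assumes "form4 \<mu>"
  shows "\<mu> a (x + y) c d = \<mu> a x c d + \<mu> a y c d" "\<mu> a (k *\<^sub>R x) c d = k * \<mu> a x c d"
        "\<mu> a b c (x + y) = \<mu> a b c x + \<mu> a b c y" "\<mu> a b c (k *\<^sub>R x) = k * \<mu> a b c x"
        "\<mu> a (x - y) c d = \<mu> a x c d - \<mu> a y c d" "\<mu> a b c (x - y) = \<mu> a b c x - \<mu> a b c y"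
  using linear_diff[OF form4_parts(2)[OF assms, of a c d], of x y] linear_diff[OF form4_parts(4)[OF assms, of a b c], of x y] linear_add[OF form4_parts(2)[OF assms, of a c d], of x y] linear_scale[OF form4_parts(2)[OF assms, of a c d], of k x]
    linear_add[OF form4_parts(4)[OF assms, of a b c], of x y] linear_scale[OF form4_parts(4)[OF assms, of a b c], of k x]
  by simp_all

lemma J_contra:
  fixes om w :: "vec4 \<Rightarrow> vec4 \<Rightarrow> real" and b1 b2 b3 b4 :: vec4
  assumes m4: "form4 \<mu>" and sy: "symplectic br om"
    and wd: "\<And>x y. w x y = pair2 (\<lambda>a b. \<mu> a b x y) u"
    and bd: "boundary2 br u" and c0: "c > 0"
    and wed: "\<And>v1 v2 v3 v4. wedge22 om om v1 v2 v3 v4 = c * \<mu> v1 v2 v3 v4"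
    and T: "om b1 b2 = 1" "om b1 b3 = 0" "om b1 b4 = 0" "om b2 b3 = 0" "om b2 b4 = 0" "om b3 b4 = 1"
    and Wt: "w b1 b2 = 0" "w b1 b3 = - lm" "w b1 b4 = 0" "w b2 b3 = 0" "w b2 b4 = lm" "w b3 b4 = 0"
    and lm: "lm > 0"
    and TC: "tame_compatible br \<mu>"
  shows False
proof -
  have fom: "form2 om" using sy unfolding symplectic_def by simp
  note L = form2_lin[OF fom]
  note as = form2_antisym[OF fom]
  have ind: "independent {b1,b2,b3,b4}" "card {b1,b2,b3,b4} = 4"
  proof -
    have "u1 = 0 \<and> u2 = 0 \<and> u3 = 0 \<and> u4 = 0" if h: "u1 *\<^sub>R b1 + u2 *\<^sub>R b2 + u3 *\<^sub>R b3 + u4 *\<^sub>R b4 = 0" for u1 u2 u3 u4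
    proof -
      have e: "om (u1 *\<^sub>R b1 + u2 *\<^sub>R b2 + u3 *\<^sub>R b3 + u4 *\<^sub>R b4) x = 0" for x using h fom unfolding form2_def
        by (simp add: bilinear_lzero)
      have t2: "om b2 b1 = -1" "om b3 b1 = 0" "om b4 b1 = 0" "om b3 b2 = 0" "om b4 b2 = 0" "om b4 b3 = -1"
        using as[of b2 b1] as[of b3 b1] as[of b4 b1] as[of b3 b2] as[of b4 b2] as[of b4 b3] T by simp_all
      have d: "om b1 b1 = 0" "om b2 b2 = 0" "om b3 b3 = 0" "om b4 b4 = 0" using fom unfolding form2_def by simp_all
      show ?thesis using e[of b1] e[of b2] e[of b3] e[of b4] T t2 d by (simp add: L)
    qed
    thus "independent {b1,b2,b3,b4}" "card {b1,b2,b3,b4} = 4" using coeff_indep by blast+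
  qed
  obtain c1 c2 c3 c4 where cl: "linear c1" "linear c2" "linear c3" "linear c4"
    and cr: "\<forall>x. x = c1 x *\<^sub>R b1 + c2 x *\<^sub>R b2 + c3 x *\<^sub>R b3 + c4 x *\<^sub>R b4"
    and dl: "c1 b1 = 1" "c2 b1 = 0" "c3 b1 = 0" "c4 b1 = 0"
     "c1 b2 = 0" "c2 b2 = 1" "c3 b2 = 0" "c4 b2 = 0"
     "c1 b3 = 0" "c2 b3 = 0" "c3 b3 = 1" "c4 b3 = 0"
     "c1 b4 = 0" "c2 b4 = 0" "c3 b4 = 0" "c4 b4 = 1"
    using coords4[OF ind] by blast
  have B: "crd b1 b2 b3 b4 c1 c2 c3 c4" unfolding crd_def using cr by blast
  note CL = linear_add[OF cl(1)] linear_scale[OF cl(1)] linear_add[OF cl(2)] linear_scale[OF cl(2)]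
            linear_add[OF cl(3)] linear_scale[OF cl(3)] linear_add[OF cl(4)] linear_scale[OF cl(4)]
            linear_neg[OF cl(1)] linear_neg[OF cl(2)] linear_neg[OF cl(3)] linear_neg[OF cl(4)]
            linear_diff[OF cl(1)] linear_diff[OF cl(2)] linear_diff[OF cl(3)] linear_diff[OF cl(4)]
  define mb where "mb = \<mu> b1 b2 b3 b4"
  have "wedge22 om om b1 b2 b3 b4 = 2" unfolding wedge22_def using T by simp
  hence mbv: "mb = 2 / c" using wed[of b1 b2 b3 b4] c0 unfolding mb_def by (simp add: field_simps)
  have mb: "mb > 0" using mbv c0 by simp
  note PS = pair2_slices[OF m4 B mb_def[symmetric], of u]
  have U: "cU c3 c4 u = 0" "cU c2 c4 u = lm / mb" "cU c2 c3 u = 0" "cU c1 c4 u = 0" "cU c1 c3 u = - lm / mb" "cU c1 c2 u = 0"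
  proof -
    have e: "mb * cU c3 c4 u = 0" "- mb * cU c2 c4 u = - lm" "mb * cU c2 c3 u = 0"
      "mb * cU c1 c4 u = 0" "- mb * cU c1 c3 u = lm" "mb * cU c1 c2 u = 0"
      using PS(1) wd[of b1 b2] Wt(1) PS(2) wd[of b1 b3] Wt(2) PS(3) wd[of b1 b4] Wt(3)
        PS(4) wd[of b2 b3] Wt(4) PS(5) wd[of b2 b4] Wt(5) PS(6) wd[of b3 b4] Wt(6) by simp_all
    show "cU c3 c4 u = 0" "cU c2 c4 u = lm / mb" "cU c2 c3 u = 0" "cU c1 c4 u = 0" "cU c1 c3 u = - lm / mb" "cU c1 c2 u = 0"
      using e mb by (simp_all add: field_simps)
  qed
  have pairF: "pair2 p u = lm / mb * (p b2 b4 - p b1 b3)" if "form2 p" for p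
    using pair2_expand[OF that cr] U by (simp add: algebra_simps)
  define J where "J = (\<lambda>x. (- (3/5) * c2 x + (4/5) * c3 x) *\<^sub>R b1 + ((3/5) * c1 x - (4/5) * c4 x) *\<^sub>R b2
       + (- (4/5) * c1 x - (3/5) * c4 x) *\<^sub>R b3 + ((4/5) * c2 x + (3/5) * c3 x) *\<^sub>R b4)"
  have cJ: "c1 (J x) = - (3/5) * c2 x + (4/5) * c3 x" "c2 (J x) = (3/5) * c1 x - (4/5) * c4 x"
     "c3 (J x) = - (4/5) * c1 x - (3/5) * c4 x" "c4 (J x) = (4/5) * c2 x + (3/5) * c3 x" for x
    unfolding J_def using crd_coord[OF cl dl] by simp_all
  have lJ: "linear J" unfolding J_def
    by (intro linearI) (simp_all add: CL algebra_simps add_divide_distrib)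
  have Jf: "J y = (- (3/5) * c2 y + (4/5) * c3 y) *\<^sub>R b1 + ((3/5) * c1 y - (4/5) * c4 y) *\<^sub>R b2
       + (- (4/5) * c1 y - (3/5) * c4 y) *\<^sub>R b3 + ((4/5) * c2 y + (3/5) * c3 y) *\<^sub>R b4" for y
      unfolding J_def by simp
  have JJ: "J (J x) = - x" for x
  proof -
    have "J (J x) = - (c1 x *\<^sub>R b1 + c2 x *\<^sub>R b2 + c3 x *\<^sub>R b3 + c4 x *\<^sub>R b4)"
      unfolding Jf[of "J x"] cJ by (simp add: algebra_simps)
    thus ?thesis using cr by metis
  qed
  have Jb: "J b1 = (3/5) *\<^sub>R b2 + (- (4/5)) *\<^sub>R b3" "J b2 = (- (3/5)) *\<^sub>R b1 + (4/5) *\<^sub>R b4"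
     "J b3 = (4/5) *\<^sub>R b1 + (3/5) *\<^sub>R b4" "J b4 = (- (4/5)) *\<^sub>R b2 + (- (3/5)) *\<^sub>R b3"
    unfolding J_def by (simp_all add: dl)
  have ac: "almost_complex J" unfolding almost_complex_def using lJ JJ by simp
  have tam: "tamed om J" unfolding tamed_def
  proof (intro allI impI)
    fix x :: vec4 assume x0: "x \<noteq> 0"
    have xe: "c1 x *\<^sub>R b1 + c2 x *\<^sub>R b2 + c3 x *\<^sub>R b3 + c4 x *\<^sub>R b4 = x" using cr[rule_format, of x] by simp
    have "om x (J x) = om (c1 x *\<^sub>R b1 + c2 x *\<^sub>R b2 + c3 x *\<^sub>R b3 + c4 x *\<^sub>R b4) (J x)" using xe by simp
    also have "\<dots> = (3/5) * (c1 x * c1 x + c2 x * c2 x + c3 x * c3 x + c4 x * c4 x)"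
      unfolding Jf[of x] form2_L0[OF fom] T by (simp add: algebra_simps)
    finally have e: "om x (J x) = (3/5) * (c1 x * c1 x + c2 x * c2 x + c3 x * c3 x + c4 x * c4 x)" .
    have "\<not> (c1 x = 0 \<and> c2 x = 0 \<and> c3 x = 0 \<and> c4 x = 0)" using xe x0 by auto
    hence "c1 x * c1 x + c2 x * c2 x + c3 x * c3 x + c4 x * c4 x > 0"
      by (smt (verit) mult_pos_pos mult_neg_neg zero_le_square)
    thus "om x (J x) > 0" using e by simp
  qed
  have io: "induces_orientation \<mu> J" unfolding induces_orientation_def
  proof (intro exI conjI)
    have "u1 = 0 \<and> u2 = 0 \<and> u3 = 0 \<and> u4 = 0" if h: "u1 *\<^sub>R b1 + u2 *\<^sub>R J b1 + u3 *\<^sub>R b3 + u4 *\<^sub>R J b3 = 0" for u1 u2 u3 u4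
    proof -
      have "c1 (u1 *\<^sub>R b1 + u2 *\<^sub>R J b1 + u3 *\<^sub>R b3 + u4 *\<^sub>R J b3) = 0" "c2 (u1 *\<^sub>R b1 + u2 *\<^sub>R J b1 + u3 *\<^sub>R b3 + u4 *\<^sub>R J b3) = 0"
        "c3 (u1 *\<^sub>R b1 + u2 *\<^sub>R J b1 + u3 *\<^sub>R b3 + u4 *\<^sub>R J b3) = 0" "c4 (u1 *\<^sub>R b1 + u2 *\<^sub>R J b1 + u3 *\<^sub>R b3 + u4 *\<^sub>R J b3) = 0"
        using h linear_0[OF cl(1)] linear_0[OF cl(2)] linear_0[OF cl(3)] linear_0[OF cl(4)] by simp_all
      hence "u1 + (4/5) * u4 = 0" "(3/5) * u2 = 0" "- (4/5) * u2 + u3 = 0" "(3/5) * u4 = 0"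
        unfolding Jb by (simp_all add: CL dl algebra_simps)
      thus ?thesis by linarith
    qed
    thus "independent {b1, J b1, b3, J b3}" "card {b1, J b1, b3, J b3} = 4" using coeff_indep by blast+
    have "\<mu> b1 (J b1) b3 (J b3) = (9/25) * mb" unfolding Jb mb_def
      by (simp add: form4_lin24[OF m4] form4_parts(6,9)[OF m4])
    thus "\<mu> b1 (J b1) b3 (J b3) > 0" using mb by simp
  qed
  obtain p where sp: "symplectic br p" and cp: "compatible p J"
    using TC ac io sy tam unfolding tame_compatible_def by blast
  have fp: "form2 p" and clp: "closed2 br p" using sp unfolding symplectic_def by auto
  have "pair2 p u = 0" using bd fp clp unfolding boundary2_def by blast
  hence e0: "p b2 b4 - p b1 b3 = 0" using pairF[OF fp] lm mb by simp
  note Lp = form2_lin[OF fp]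
  note asp = form2_antisym[OF fp]
  have dp: "p x x = 0" for x using fp unfolding form2_def by simp
  have "p (J b1) (J b2) = p b1 b2" using cp unfolding compatible_def by blast
  hence e1: "(9/25) * p b1 b2 + (12/25) * p b2 b4 - (12/25) * p b1 b3 - (16/25) * p b3 b4 = p b1 b2"
    unfolding Jb using asp[of b2 b1] asp[of b3 b1] asp[of b3 b4] dp by (simp add: Lp algebra_simps)
  have nz: "b1 \<noteq> 0" "b4 \<noteq> 0" using T fom unfolding form2_def by (auto simp: bilinear_lzero bilinear_rzero)
  have "p b1 (J b1) > 0" "p b4 (J b4) > 0" using cp nz unfolding compatible_def tamed_def by auto
  hence t1: "(3/5) * p b1 b2 - (4/5) * p b1 b3 > 0" and t4: "(4/5) * p b2 b4 + (3/5) * p b3 b4 > 0"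
    unfolding Jb using asp[of b4 b2] asp[of b4 b3] by (simp_all add: Lp algebra_simps)
  show False using e0 e1 t1 t4 by linarith
qed

lemma form2_zero: "form2 (\<lambda>x y. 0)"
  unfolding form2_def bilinear_def by (simp add: linear_zero)

lemma form2_add: assumes "form2 \<alpha>" "form2 \<beta>" shows "form2 (\<lambda>x y. \<alpha> x y + \<beta> x y)"
proof -
  have a: "bilinear \<alpha>" "\<And>x. \<alpha> x x = 0" and b: "bilinear \<beta>" "\<And>x. \<beta> x x = 0"
    using assms unfolding form2_def by auto
  show ?thesis unfolding form2_def bilinear_def
    by (intro conjI allI linearI)
       (simp_all add: a b bilinear_ladd[OF a(1)] bilinear_radd[OF a(1)] bilinear_lmul[OF a(1)] bilinear_rmul[OF a(1)]
         bilinear_ladd[OF b(1)] bilinear_radd[OF b(1)] bilinear_lmul[OF b(1)] bilinear_rmul[OF b(1)] algebra_simps)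
qed

lemma form2_wdef: assumes "form4 \<mu>" shows "form2 (\<lambda>x y. pair2 (\<lambda>a b. \<mu> a b x y) u)"
proof (induction u)
  case Nil then show ?case by (simp add: form2_zero)
next
  case (Cons p u)
  obtain a b where p: "p = (a,b)" by force
  show ?case unfolding p pair2_simps
    by (rule form2_add[OF form4_slices(3)[OF assms] Cons])
qed

lemma dirA:
  assumes m4: "form4 \<mu>" and sy: "symplectic br om" and c0: "c > 0"
    and wed: "\<And>v1 v2 v3 v4. wedge22 om om v1 v2 v3 v4 = c * \<mu> v1 v2 v3 v4"
    and bd: "boundary2 br u" and Ph: "Phi \<mu> u u > 0"
    and TC: "tame_compatible br \<mu>"
  shows False
proof -
  have fom: "form2 om" and nd: "nondegenerate2 om" and clo: "closed2 br om"
    using sy unfolding symplectic_def by auto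
  define w where "w = (\<lambda>x y. pair2 (\<lambda>a b. \<mu> a b x y) u)"
  have fw: "form2 w" unfolding w_def by (rule form2_wdef[OF m4])
  define mm where "mm = \<mu> (ax 1) (ax 2) (ax 3) (ax 4)"
  define U12 where "U12 = cU (\<lambda>x. x$1) (\<lambda>x. x$2) u"
  define U13 where "U13 = cU (\<lambda>x. x$1) (\<lambda>x. x$3) u"
  define U14 where "U14 = cU (\<lambda>x. x$1) (\<lambda>x. x$4) u"
  define U23 where "U23 = cU (\<lambda>x. x$2) (\<lambda>x. x$3) u"
  define U24 where "U24 = cU (\<lambda>x. x$2) (\<lambda>x. x$4) u"
  define U34 where "U34 = cU (\<lambda>x. x$3) (\<lambda>x. x$4) u"
  define o12 where "o12 = om (ax 1) (ax 2)"
  define o13 where "o13 = om (ax 1) (ax 3)"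
  define o14 where "o14 = om (ax 1) (ax 4)"
  define o23 where "o23 = om (ax 2) (ax 3)"
  define o24 where "o24 = om (ax 2) (ax 4)"
  define o34 where "o34 = om (ax 3) (ax 4)"
  define W12 where "W12 = w (ax 1) (ax 2)"
  define W13 where "W13 = w (ax 1) (ax 3)"
  define W14 where "W14 = w (ax 1) (ax 4)"
  define W23 where "W23 = w (ax 2) (ax 3)"
  define W24 where "W24 = w (ax 2) (ax 4)"
  define W34 where "W34 = w (ax 3) (ax 4)"
  note PS = pair2_slices[OF m4 std_crd mm_def[symmetric], of u]
  have Wv: "W12 = mm * U34" "W13 = - mm * U24" "W14 = mm * U23" "W23 = mm * U14" "W24 = - mm * U13" "W34 = mm * U12"
    unfolding W12_def W13_def W14_def W23_def W24_def W34_def w_def U12_def U13_def U14_def U23_def U24_def U34_def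
    using PS by simp_all
  have "pair2 om u = 0" using bd fom clo unfolding boundary2_def by blast
  hence po: "U12 * o12 + U13 * o13 + U14 * o14 + U23 * o23 + U24 * o24 + U34 * o34 = 0"
    using pair2_expand[OF fom std_crd[unfolded crd_def]]
    unfolding U12_def U13_def U14_def U23_def U24_def U34_def o12_def o13_def o14_def o23_def o24_def o34_def
    by simp
  have H: "o12*W34 + o34*W12 - o13*W24 - o24*W13 + o14*W23 + o23*W14 = 0"
  proof -
    have "o12*W34 + o34*W12 - o13*W24 - o24*W13 + o14*W23 + o23*W14
       = mm * (U12 * o12 + U13 * o13 + U14 * o14 + U23 * o23 + U24 * o24 + U34 * o34)"
      unfolding Wv by (simp add: algebra_simps)
    thus ?thesis using po by simp
  qed
  define X where "X = U12 * U34 - U13 * U24 + U14 * U23"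
  have PhX: "Phi \<mu> u u = 2 * mm * X"
    using Phi_expand[OF m4 std_crd, of u u] unfolding X_def mm_def U12_def U13_def U14_def U23_def U24_def U34_def
    by (simp add: algebra_simps)
  have "2 * (mm * X) > 0" using Ph PhX by (simp add: mult.assoc)
  hence mX: "mm * X > 0" by linarith
  define Pf :: real where "Pf = o12 * o34 - o13 * o24 + o14 * o23"
  have P2: "2 * Pf = c * mm"
    using wed[of "ax 1" "ax 2" "ax 3" "ax 4"] unfolding wedge22_def Pf_def mm_def o12_def o13_def o14_def o23_def o24_def o34_def
    by (simp add: algebra_simps)
  define PW where "PW = W12*W34 - W13*W24 + W14*W23"
  have PWv: "PW = mm * mm * X" unfolding PW_def X_def Wv by (simp add: algebra_simps)
  have "Pf * PW = (c/2) * (mm * mm) * (mm * X)"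
    using P2 PWv by (simp add: algebra_simps)
  moreover have "mm \<noteq> 0" using mX by auto
  ultimately have PPW: "Pf * PW > 0"
  proof -
    assume e: "Pf * PW = (c/2) * (mm * mm) * (mm * X)" and m0: "mm \<noteq> 0"
    have "mm * mm > 0" using m0 by (metis not_real_square_gt_zero)
    hence "(c/2) * (mm * mm) * (mm * X) > 0" using c0 mX by (simp add: mult_pos_pos)
    thus ?thesis using e by simp
  qed
  hence P0: "Pf \<noteq> 0" by auto
  define M where "M = Mk o12 o13 o14 o23 o24 o34 W12 W13 W14 W23 W24 W34"
  have lM: "linear M" unfolding M_def by (rule Mk_linear)
  have omM: "om (M x) y = Pf * w x y" for x y
    unfolding std_expand[OF fom, of "M x" y] std_expand[OF fw, of x y]
    unfolding M_def Pf_def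
      o12_def[symmetric] o13_def[symmetric] o14_def[symmetric] o23_def[symmetric] o24_def[symmetric] o34_def[symmetric]
      W12_def[symmetric] W13_def[symmetric] W14_def[symmetric] W23_def[symmetric] W24_def[symmetric] W34_def[symmetric]
    by (rule Mk_omega)
  have MM: "M (M x) = (- (Pf * PW)) *\<^sub>R x" for x
    unfolding M_def Pf_def PW_def
    by (rule Mk_sq) (use H in \<open>simp add: algebra_simps\<close>)
  have q: "PW / Pf > 0" using PPW P0
    by (metis divide_pos_pos divide_neg_neg linorder_neqE_linordered_idom mult_less_0_iff zero_less_mult_iff)
  define lm where "lm = sqrt (PW / Pf)"
  have lm: "lm > 0" unfolding lm_def using q by simp
  have lm2: "lm * lm = PW / Pf" unfolding lm_def using q by (metis abs_of_pos real_sqrt_mult_self)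
  define I where "I = (\<lambda>x. (1 / (Pf * lm)) *\<^sub>R M x)"
  have lI: "linear I" unfolding I_def using lM by (auto intro!: linearI simp: linear_add linear_scale algebra_simps)
  have PW0: "PW \<noteq> 0" using PPW by auto
  have II: "I (I x) = - x" for x
  proof -
    have "I (I x) = ((1 / (Pf * lm)) * (1 / (Pf * lm)) * (- (Pf * PW))) *\<^sub>R x"
      unfolding I_def using MM[of x] linear_scale[OF lM] by simp
    also have "(1 / (Pf * lm)) * (1 / (Pf * lm)) * (- (Pf * PW)) = -1"
    proof -
      have "(1 / (Pf * lm)) * (1 / (Pf * lm)) * (- (Pf * PW)) = - (PW / (Pf * (lm * lm)))"
        using P0 lm by (simp add: field_simps)
      also have "\<dots> = -1" unfolding lm2 using P0 PW0 by simp
      finally show ?thesis .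
    qed
    finally show ?thesis by simp
  qed
  have wI: "w x y = lm * om (I x) y" for x y
    unfolding I_def using form2_lin(3)[OF fom, of "1 / (Pf * lm)" "M x" y] omM[of x y] P0 lm by simp
  obtain b1 b2 b3 b4 where
    T: "om b1 b2 = 1" "om b1 b3 = 0" "om b1 b4 = 0" "om b2 b3 = 0" "om b2 b4 = 0" "om b3 b4 = 1"
    and Wt: "w b1 b2 = 0" "w b1 b3 = - lm" "w b1 b4 = 0" "w b2 b3 = 0" "w b2 b4 = lm" "w b3 b4 = 0"
    using darboux_from_I[OF fom nd fw lI II wI lm] by blast
  show False
    by (rule J_contra[OF m4 sy _ bd c0 wed T Wt lm TC]) (simp add: w_def)
qed

lemma dual_cone:
  fixes g1 g2 s t :: real
  assumes H: "\<And>A B x y. A > 0 \<Longrightarrow> B > 0 \<Longrightarrow> x * x + y * y < A * B \<Longrightarrow> g1 * A + g2 * B + s * x + t * y \<ge> 0"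
  shows "g1 \<ge> 0" "g2 \<ge> 0" "s * s + t * t \<le> 4 * g1 * g2"
proof -
  show g1: "g1 \<ge> 0"
  proof (rule ccontr)
    assume "\<not> g1 \<ge> 0" hence n: "g1 < 0" by simp
    define A where "A = (\<bar>g2\<bar> + 1) / (- g1)"
    have A: "A > 0" unfolding A_def using n by (intro divide_pos_pos) auto
    have "g1 * A = - (\<bar>g2\<bar> + 1)" unfolding A_def using n by (simp add: field_simps)
    moreover have "g1 * A + g2 * 1 + s * 0 + t * 0 \<ge> 0" using H[OF A, of 1 0 0] A by simp
    ultimately show False by linarith
  qed
  show g2: "g2 \<ge> 0"
  proof (rule ccontr)
    assume "\<not> g2 \<ge> 0" hence n: "g2 < 0" by simp
    define B where "B = (\<bar>g1\<bar> + 1) / (- g2)"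
    have B: "B > 0" unfolding B_def using n by (intro divide_pos_pos) auto
    have "g2 * B = - (\<bar>g1\<bar> + 1)" unfolding B_def using n by (simp add: field_simps)
    moreover have "g1 * 1 + g2 * B + s * 0 + t * 0 \<ge> 0" using H[of 1 B 0 0] B by simp
    ultimately show False by linarith
  qed
  show "s * s + t * t \<le> 4 * g1 * g2"
  proof (rule ccontr)
    define N where "N = s * s + t * t"
    assume "\<not> s * s + t * t \<le> 4 * g1 * g2"
    hence NN: "N > 4 * g1 * g2" unfolding N_def by simp
    have "4 * g1 * g2 \<ge> 0" using g1 g2 by simp
    hence N0: "N > 0" using NN by linarith
    show False
    proof (cases "g1 = 0")
      case True
      define k where "k = (g2 + 1) / N"
      define A where "A = k * k * N + 1"
      have "k * k * N \<ge> 0" using N0 by simp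
      hence A: "A > 0" unfolding A_def by linarith
      have "(-k * s) * (-k * s) + (-k * t) * (-k * t) = k * k * N" unfolding N_def by (simp add: algebra_simps)
      hence "(-k * s) * (-k * s) + (-k * t) * (-k * t) < A * 1" unfolding A_def by simp
      hence "g1 * A + g2 * 1 + s * (-k * s) + t * (-k * t) \<ge> 0" using H[of A 1 "-k * s" "-k * t"] A by simp
      moreover have "s * (-k * s) + t * (-k * t) = - k * N" unfolding N_def by (simp add: algebra_simps)
      moreover have "k * N = g2 + 1" unfolding k_def using N0 by simp
      ultimately show False using True by simp
    next
      case False
      hence gp: "g1 > 0" using g1 by simp
      define k where "k = 1 / (2 * g1)"
      define d where "d = (N - 4 * g1 * g2) / (8 * g1 * g1)"
      have d: "d > 0" unfolding d_def using NN gp by simp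
      define A where "A = k * k * N + d"
      have "k * k * N \<ge> 0" using N0 by simp
      hence A: "A > 0" unfolding A_def using d by linarith
      have "(-k * s) * (-k * s) + (-k * t) * (-k * t) = k * k * N" unfolding N_def by (simp add: algebra_simps)
      hence "(-k * s) * (-k * s) + (-k * t) * (-k * t) < A * 1" unfolding A_def using d by simp
      hence "g1 * A + g2 * 1 + s * (-k * s) + t * (-k * t) \<ge> 0" using H[of A 1 "-k * s" "-k * t"] A by simp
      moreover have "g1 * A + g2 * 1 + s * (-k * s) + t * (-k * t) = - (N - 4 * g1 * g2) / (8 * g1)"
        unfolding A_def k_def d_def N_def using gp by (simp add: field_simps)
      moreover have "(N - 4 * g1 * g2) / (8 * g1) > 0" using NN gp by simp
      ultimately show False by linarith
    qed
  qed
qed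

lemma strict_cone:
  fixes g1 g2 s t A B x y :: real
  assumes g1: "g1 \<ge> 0" and g2: "g2 \<ge> 0" and st: "s * s + t * t \<le> 4 * g1 * g2"
    and A: "A > 0" and B: "B > 0" and xy: "x * x + y * y < A * B"
    and z: "g1 * A + g2 * B + s * x + t * y = 0"
  shows "g1 = 0 \<and> g2 = 0 \<and> s = 0 \<and> t = 0"
proof -
  have st0: "s = 0 \<and> t = 0"
  proof (rule ccontr)
    assume "\<not> (s = 0 \<and> t = 0)"
    hence N: "s * s + t * t > 0" by (metis add_nonneg_pos add_pos_nonneg not_real_square_gt_zero zero_le_square)
    have cs: "(s * x + t * y) * (s * x + t * y) \<le> (s * s + t * t) * (x * x + y * y)"
      using zero_le_square[of "s * y - t * x"] by (simp add: algebra_simps power2_eq_square)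
    have "(s * s + t * t) * (x * x + y * y) < (s * s + t * t) * (A * B)" using N xy by simp
    also have "\<dots> \<le> (4 * g1 * g2) * (A * B)" using st A B by (intro mult_right_mono) simp_all
    also have "\<dots> \<le> (g1 * A + g2 * B) * (g1 * A + g2 * B)"
      using zero_le_square[of "g1 * A - g2 * B"] by (simp add: algebra_simps power2_eq_square)
    also have "(g1 * A + g2 * B) = - (s * x + t * y)" using z by linarith
    finally have "(s * s + t * t) * (x * x + y * y) < (s * x + t * y) * (s * x + t * y)" by (simp add: algebra_simps)
    thus False using cs by linarith
  qed
  hence "g1 * A + g2 * B = 0" using z by simp
  moreover have "g1 * A \<ge> 0" "g2 * B \<ge> 0" using g1 g2 A B by simp_all
  ultimately have "g1 * A = 0" "g2 * B = 0" by linarith+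
  thus ?thesis using A B st0 by simp
qed

lemma form2_scale: assumes "form2 \<alpha>" shows "form2 (\<lambda>x y. k * \<alpha> x y)"
proof -
  have a: "bilinear \<alpha>" "\<And>x. \<alpha> x x = 0" using assms unfolding form2_def by auto
  show ?thesis unfolding form2_def bilinear_def
    by (intro conjI allI linearI)
       (simp_all add: a bilinear_ladd[OF a(1)] bilinear_radd[OF a(1)] bilinear_lmul[OF a(1)] bilinear_rmul[OF a(1)] algebra_simps)
qed

lemma lin_aux: "(4::real) * X = 4 * P - S + D \<Longrightarrow> X \<le> 0 \<Longrightarrow> S \<le> 4 * P \<Longrightarrow> D \<le> 0" by linarith

lemma dirB:
  assumes m4: "form4 \<mu>" and N: "\<forall>u. boundary2 br u \<longrightarrow> Phi \<mu> u u \<le> 0"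
    and ac: "almost_complex J" and io: "induces_orientation \<mu> J"
    and sy: "symplectic br om" and tm: "tamed om J"
  shows "\<exists>\<omega>. symplectic br \<omega> \<and> compatible \<omega> J"
proof (rule ccontr)
  assume nc: "\<not> (\<exists>\<omega>. symplectic br \<omega> \<and> compatible \<omega> J)"
  obtain e1 e3 where ind: "independent {e1, J e1, e3, J e3}" "card {e1, J e1, e3, J e3} = 4"
    and mpos: "\<mu> e1 (J e1) e3 (J e3) > 0"
    using io unfolding induces_orientation_def by blast
  define e2 where "e2 = J e1"
  define e4 where "e4 = J e3"
  have lJ: "linear J" and JJ: "\<And>x. J (J x) = - x" using ac unfolding almost_complex_def by auto
  have Je: "J e1 = e2" "J e2 = - e1" "J e3 = e4" "J e4 = - e3" unfolding e2_def e4_def using JJ by auto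
  obtain c1 c2 c3 c4 where cl: "linear c1" "linear c2" "linear c3" "linear c4"
    and cr: "\<forall>x. x = c1 x *\<^sub>R e1 + c2 x *\<^sub>R e2 + c3 x *\<^sub>R e3 + c4 x *\<^sub>R e4"
    and dl: "c1 e1 = 1" "c2 e1 = 0" "c3 e1 = 0" "c4 e1 = 0"
     "c1 e2 = 0" "c2 e2 = 1" "c3 e2 = 0" "c4 e2 = 0"
     "c1 e3 = 0" "c2 e3 = 0" "c3 e3 = 1" "c4 e3 = 0"
     "c1 e4 = 0" "c2 e4 = 0" "c3 e4 = 0" "c4 e4 = 1"
    using coords4[OF ind[folded e2_def e4_def]] by blast
  have B: "crd e1 e2 e3 e4 c1 c2 c3 c4" unfolding crd_def using cr by blast
  note CL = linear_add[OF cl(1)] linear_scale[OF cl(1)] linear_add[OF cl(2)] linear_scale[OF cl(2)]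
            linear_add[OF cl(3)] linear_scale[OF cl(3)] linear_add[OF cl(4)] linear_scale[OF cl(4)]
            linear_neg[OF cl(1)] linear_neg[OF cl(2)] linear_neg[OF cl(3)] linear_neg[OF cl(4)]
            linear_diff[OF cl(1)] linear_diff[OF cl(2)] linear_diff[OF cl(3)] linear_diff[OF cl(4)]
  define m where "m = \<mu> e1 e2 e3 e4"
  have m: "m > 0" using mpos unfolding m_def e2_def e4_def .
  have cJ: "c1 (J x) = - c2 x" "c2 (J x) = c1 x" "c3 (J x) = - c4 x" "c4 (J x) = c3 x" for x
  proof -
    have "J x = J (c1 x *\<^sub>R e1 + c2 x *\<^sub>R e2 + c3 x *\<^sub>R e3 + c4 x *\<^sub>R e4)" using cr by metis
    also have "\<dots> = (- c2 x) *\<^sub>R e1 + c1 x *\<^sub>R e2 + (- c4 x) *\<^sub>R e3 + c3 x *\<^sub>R e4"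
      using Je by (simp add: linear_add[OF lJ] linear_scale[OF lJ] algebra_simps)
    finally have Jx: "J x = (- c2 x) *\<^sub>R e1 + c1 x *\<^sub>R e2 + (- c4 x) *\<^sub>R e3 + c3 x *\<^sub>R e4" .
    show "c1 (J x) = - c2 x" unfolding Jx by (rule crd_coord(1)[OF cl dl])
    show "c2 (J x) = c1 x" unfolding Jx by (rule crd_coord(2)[OF cl dl])
    show "c3 (J x) = - c4 x" unfolding Jx by (rule crd_coord(3)[OF cl dl])
    show "c4 (J x) = c3 x" unfolding Jx by (rule crd_coord(4)[OF cl dl])
  qed
  have expand: "p x y = (c1 x * c2 y - c2 x * c1 y) * p e1 e2 + (c1 x * c3 y - c3 x * c1 y) * p e1 e3
     + (c1 x * c4 y - c4 x * c1 y) * p e1 e4 + (c2 x * c3 y - c3 x * c2 y) * p e2 e3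
     + (c2 x * c4 y - c4 x * c2 y) * p e2 e4 + (c3 x * c4 y - c4 x * c3 y) * p e3 e4" if "form2 p" for p x y
  proof -
    have "p x y = p (c1 x *\<^sub>R e1 + c2 x *\<^sub>R e2 + c3 x *\<^sub>R e3 + c4 x *\<^sub>R e4) (c1 y *\<^sub>R e1 + c2 y *\<^sub>R e2 + c3 y *\<^sub>R e3 + c4 y *\<^sub>R e4)"
      using cr[rule_format, of x] cr[rule_format, of y] by simp
    thus ?thesis using form2_L0[OF that] by simp
  qed
  have tamedQ: "p x (J x) = p e1 e2 * (c1 x * c1 x + c2 x * c2 x) + p e3 e4 * (c3 x * c3 x + c4 x * c4 x)
      + (p e1 e3 + p e2 e4) * (c2 x * c3 x - c1 x * c4 x) + (p e1 e4 - p e2 e3) * (c1 x * c3 x + c2 x * c4 x)"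
    if "form2 p" for p x
    using expand[OF that, of x "J x"] cJ by (simp add: algebra_simps)
  define C6 :: "(vec4 \<Rightarrow> vec4 \<Rightarrow> real) \<Rightarrow> real \<times> real \<times> real \<times> real \<times> real \<times> real"
    where "C6 = (\<lambda>\<alpha>. (\<alpha> e1 e2, \<alpha> e1 e3, \<alpha> e1 e4, \<alpha> e2 e3, \<alpha> e2 e4, \<alpha> e3 e4))"
  define Zs where "Zs = {\<alpha>. form2 \<alpha> \<and> closed2 br \<alpha>}"
  define Ts where "Ts = {\<alpha>. form2 \<alpha> \<and> (\<forall>x y. \<alpha> (J x) (J y) = \<alpha> x y) \<and> tamed \<alpha> J}"
  have comb: "C6 (\<lambda>x y. u * \<alpha> x y + v * \<beta> x y) = u *\<^sub>R C6 \<alpha> + v *\<^sub>R C6 \<beta>" for u v \<alpha> \<beta>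
    unfolding C6_def by simp
  have Zcomb: "(\<lambda>x y. u * \<alpha> x y + v * \<beta> x y) \<in> Zs" if "\<alpha> \<in> Zs" "\<beta> \<in> Zs" for u v \<alpha> \<beta>
  proof -
    have fa: "form2 \<alpha>" "closed2 br \<alpha>" "form2 \<beta>" "closed2 br \<beta>" using that unfolding Zs_def by auto
    have "form2 (\<lambda>x y. u * \<alpha> x y + v * \<beta> x y)" by (rule form2_add[OF form2_scale[OF fa(1)] form2_scale[OF fa(3)]])
    moreover have "d2 br (\<lambda>x y. u * \<alpha> x y + v * \<beta> x y) x y z = u * d2 br \<alpha> x y z + v * d2 br \<beta> x y z" for x y z
      unfolding d2_def by (simp add: algebra_simps)
    ultimately show ?thesis using fa unfolding Zs_def closed2_def by simp
  qed
  have Tcomb: "(\<lambda>x y. u * \<alpha> x y + v * \<beta> x y) \<in> Ts" if "\<alpha> \<in> Ts" "\<beta> \<in> Ts" "u \<ge> 0" "v \<ge> 0" "u + v = 1" for u v \<alpha> \<beta>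
  proof -
    have fa: "form2 \<alpha>" "\<forall>x y. \<alpha> (J x) (J y) = \<alpha> x y" "tamed \<alpha> J" "form2 \<beta>" "\<forall>x y. \<beta> (J x) (J y) = \<beta> x y" "tamed \<beta> J"
      using that unfolding Ts_def by auto
    have "form2 (\<lambda>x y. u * \<alpha> x y + v * \<beta> x y)" by (rule form2_add[OF form2_scale[OF fa(1)] form2_scale[OF fa(4)]])
    moreover have "u * \<alpha> x (J x) + v * \<beta> x (J x) > 0" if "x \<noteq> 0" for x
    proof -
      have a: "\<alpha> x (J x) > 0" "\<beta> x (J x) > 0" using fa(3,6) that unfolding tamed_def by auto
      show ?thesis
      proof (cases "u > 0")
        case True
        then show ?thesis using a \<open>v \<ge> 0\<close> by (simp add: add_pos_nonneg)
      next
        case False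
        hence "v > 0" using \<open>u \<ge> 0\<close> \<open>u + v = 1\<close> by simp
        then show ?thesis using a \<open>u \<ge> 0\<close> by (simp add: add_nonneg_pos)
      qed
    qed
    ultimately show ?thesis using fa unfolding Ts_def tamed_def by simp
  qed
  define pf where "pf = (\<lambda>A B x y. \<lambda>X Y. A * (c1 X * c2 Y - c2 X * c1 Y) + x * (c1 X * c3 Y - c3 X * c1 Y)
     + y * (c1 X * c4 Y - c4 X * c1 Y) - y * (c2 X * c3 Y - c3 X * c2 Y) + x * (c2 X * c4 Y - c4 X * c2 Y)
     + B * (c3 X * c4 Y - c4 X * c3 Y))"
  have pf_form: "form2 (pf A B x y)" for A B x y
    unfolding form2_def bilinear_def pf_def
    by (intro conjI allI linearI) (simp_all add: CL algebra_simps)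
  have pf_C6: "C6 (pf A B x y) = (A, x, y, - y, x, B)" for A B x y
    unfolding C6_def pf_def by (simp add: dl)
  have pf_inv: "pf A B x y (J X) (J Y) = pf A B x y X Y" for A B x y X Y
    unfolding pf_def cJ by (simp add: algebra_simps)
  have pf_T: "pf A B x y \<in> Ts" if hA: "A > 0" and hB: "B > 0" and hAB: "x * x + y * y < A * B" for A B x y
  proof -
    have "pf A B x y X (J X) > 0" if X0: "X \<noteq> 0" for X
    proof -
      have q: "pf A B x y X (J X) = A * (c1 X * c1 X + c2 X * c2 X) + B * (c3 X * c3 X + c4 X * c4 X)
          + 2 * x * (c2 X * c3 X - c1 X * c4 X) + 2 * y * (c1 X * c3 X + c2 X * c4 X)"
        unfolding pf_def cJ by (simp add: algebra_simps)
      have sos: "A * (pf A B x y X (J X)) = (A * c1 X - x * c4 X + y * c3 X) * (A * c1 X - x * c4 X + y * c3 X)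
         + (A * c2 X + x * c3 X + y * c4 X) * (A * c2 X + x * c3 X + y * c4 X)
         + (A * B - x * x - y * y) * (c3 X * c3 X + c4 X * c4 X)"
        unfolding q by (simp add: algebra_simps)
      have nz: "\<not> (c1 X = 0 \<and> c2 X = 0 \<and> c3 X = 0 \<and> c4 X = 0)" using X0 cr[rule_format, of X] by auto
      show ?thesis
      proof (cases "c3 X = 0 \<and> c4 X = 0")
        case True
        hence "c1 X * c1 X + c2 X * c2 X > 0" using nz
          by (metis add_nonneg_pos add_pos_nonneg not_real_square_gt_zero zero_le_square)
        thus ?thesis using q True \<open>A > 0\<close> by simp
      next
        case False
        hence "c3 X * c3 X + c4 X * c4 X > 0"
          by (metis add_nonneg_pos add_pos_nonneg not_real_square_gt_zero zero_le_square)
        hence "(A * B - x * x - y * y) * (c3 X * c3 X + c4 X * c4 X) > 0" using hAB by simp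
        moreover have "(A * c1 X - x * c4 X + y * c3 X) * (A * c1 X - x * c4 X + y * c3 X) \<ge> 0" by simp
        moreover have "(A * c2 X + x * c3 X + y * c4 X) * (A * c2 X + x * c3 X + y * c4 X) \<ge> 0" by simp
        ultimately have "A * (pf A B x y X (J X)) > 0" unfolding sos by linarith
        thus ?thesis using \<open>A > 0\<close> by (simp add: zero_less_mult_iff)
      qed
    qed
    thus ?thesis unfolding Ts_def tamed_def using pf_form pf_inv by simp
  qed
  have cvS: "convex (C6 ` Zs)"
  proof (rule convexI)
    fix x y and u v :: real assume "x \<in> C6 ` Zs" "y \<in> C6 ` Zs" "0 \<le> u" "0 \<le> v" "u + v = 1"
    then obtain \<alpha> \<beta> where ab: "\<alpha> \<in> Zs" "\<beta> \<in> Zs" "x = C6 \<alpha>" "y = C6 \<beta>" by auto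
    have "u *\<^sub>R x + v *\<^sub>R y = C6 (\<lambda>p q. u * \<alpha> p q + v * \<beta> p q)" using comb ab by simp
    moreover have "(\<lambda>p q. u * \<alpha> p q + v * \<beta> p q) \<in> Zs" using Zcomb ab by blast
    ultimately show "u *\<^sub>R x + v *\<^sub>R y \<in> C6 ` Zs" by simp
  qed
  have cvT: "convex (C6 ` Ts)"
  proof (rule convexI)
    fix x y and u v :: real assume "x \<in> C6 ` Ts" "y \<in> C6 ` Ts" and uv: "0 \<le> u" "0 \<le> v" "u + v = 1"
    then obtain \<alpha> \<beta> where ab: "\<alpha> \<in> Ts" "\<beta> \<in> Ts" "x = C6 \<alpha>" "y = C6 \<beta>" by auto
    have "u *\<^sub>R x + v *\<^sub>R y = C6 (\<lambda>p q. u * \<alpha> p q + v * \<beta> p q)" using comb ab by simp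
    moreover have "(\<lambda>p q. u * \<alpha> p q + v * \<beta> p q) \<in> Ts" using Tcomb ab uv by blast
    ultimately show "u *\<^sub>R x + v *\<^sub>R y \<in> C6 ` Ts" by simp
  qed
  have Z0: "(\<lambda>x y. 0) \<in> Zs" unfolding Zs_def closed2_def d2_def using form2_zero by simp
  have neS: "C6 ` Zs \<noteq> {}" using Z0 by blast
  have neT: "C6 ` Ts \<noteq> {}" using pf_T[of 1 1 0 0] by auto
  have eqC6: "\<alpha> = \<beta>" if "form2 \<alpha>" "form2 \<beta>" "C6 \<alpha> = C6 \<beta>" for \<alpha> \<beta>
  proof (intro ext)
    fix x y
    have "\<alpha> e1 e2 = \<beta> e1 e2" "\<alpha> e1 e3 = \<beta> e1 e3" "\<alpha> e1 e4 = \<beta> e1 e4" "\<alpha> e2 e3 = \<beta> e2 e3"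
      "\<alpha> e2 e4 = \<beta> e2 e4" "\<alpha> e3 e4 = \<beta> e3 e4" using that(3) unfolding C6_def by simp_all
    thus "\<alpha> x y = \<beta> x y" using expand[OF that(1), of x y] expand[OF that(2), of x y] by simp
  qed
  have dis: "C6 ` Zs \<inter> C6 ` Ts = {}"
  proof (rule ccontr)
    assume "C6 ` Zs \<inter> C6 ` Ts \<noteq> {}"
    then obtain \<alpha> \<beta> where a: "\<alpha> \<in> Zs" and b: "\<beta> \<in> Ts" and e: "C6 \<alpha> = C6 \<beta>" by force
    have "\<alpha> = \<beta>" using eqC6 a b e unfolding Zs_def Ts_def by blast
    hence "\<beta> \<in> Zs" using a by simp
    hence z: "form2 \<beta>" "closed2 br \<beta>" unfolding Zs_def by auto
    have t: "\<forall>x y. \<beta> (J x) (J y) = \<beta> x y" "tamed \<beta> J" using b unfolding Ts_def by auto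
    have "nondegenerate2 \<beta>" unfolding nondegenerate2_def
    proof (intro allI impI)
      fix v :: vec4 assume "v \<noteq> 0"
      hence "\<beta> v (J v) > 0" using t(2) unfolding tamed_def by blast
      thus "\<exists>w. \<beta> v w \<noteq> 0" by (intro exI[of _ "J v"]) simp
    qed
    hence "symplectic br \<beta> \<and> compatible \<beta> J" using z t unfolding symplectic_def compatible_def by blast
    thus False using nc by blast
  qed
  obtain a b0 where a0: "a \<noteq> 0" and aS: "\<forall>x\<in>C6 ` Zs. inner a x \<le> b0" and aT: "\<forall>x\<in>C6 ` Ts. inner a x \<ge> b0"
    using separating_hyperplane_sets[OF cvS cvT neS neT dis] by blast
  obtain g12 g13 g14 g23 g24 g34 where ag: "a = (g12, g13, g14, g23, g24, g34)" by (cases a) auto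
  have inC6: "inner a (C6 \<alpha>) = g12 * \<alpha> e1 e2 + g13 * \<alpha> e1 e3 + g14 * \<alpha> e1 e4 + g23 * \<alpha> e2 e3 + g24 * \<alpha> e2 e4 + g34 * \<alpha> e3 e4" for \<alpha>
    unfolding ag C6_def by (simp add: algebra_simps)
  have aZ: "inner a (C6 \<alpha>) = 0" if "\<alpha> \<in> Zs" for \<alpha>
  proof (rule ccontr)
    define s where "s = inner a (C6 \<alpha>)"
    assume "inner a (C6 \<alpha>) \<noteq> 0"
    hence s0: "s \<noteq> 0" unfolding s_def .
    define r where "r = (\<bar>b0\<bar> + 1) / s"
    have "(\<lambda>x y. r * \<alpha> x y + 0 * \<alpha> x y) \<in> Zs" using Zcomb that by blast
    hence "inner a (C6 (\<lambda>x y. r * \<alpha> x y + 0 * \<alpha> x y)) \<le> b0" using aS by blast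
    moreover have "inner a (C6 (\<lambda>x y. r * \<alpha> x y + 0 * \<alpha> x y)) = r * s" unfolding comb s_def by (simp add: inner_scaleR_right)
    moreover have "r * s = \<bar>b0\<bar> + 1" unfolding r_def using s0 by simp
    ultimately show False by linarith
  qed
  have b00: "b0 \<ge> 0"
  proof -
    have "C6 (\<lambda>x y. 0) \<in> C6 ` Zs" using Z0 by blast
    hence "inner a (C6 (\<lambda>x y. 0)) \<le> b0" using aS by blast
    moreover have "inner a (C6 (\<lambda>x y. 0)) = 0" unfolding inC6 by simp
    ultimately show ?thesis by simp
  qed
  have region: "g12 * A + g34 * B + (g13 + g24) * x + (g14 - g23) * y \<ge> 0"
    if "A > 0" "B > 0" "x * x + y * y < A * B" for A B x y
  proof -
    have "inner a (C6 (pf A B x y)) \<ge> b0" using aT pf_T[OF that] by blast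
    hence "inner a (C6 (pf A B x y)) \<ge> 0" using b00 by linarith
    thus ?thesis unfolding inC6 using pf_C6[of A B x y] unfolding C6_def by (simp add: algebra_simps)
  qed
  have dc: "g12 \<ge> 0" "g34 \<ge> 0" "(g13 + g24) * (g13 + g24) + (g14 - g23) * (g14 - g23) \<le> 4 * g12 * g34"
    using dual_cone[of g12 g34 "g13 + g24" "g14 - g23"] region by blast+
  define uu where "uu = [(g12 *\<^sub>R e1, e2), (g13 *\<^sub>R e1, e3), (g14 *\<^sub>R e1, e4), (g23 *\<^sub>R e2, e3), (g24 *\<^sub>R e2, e4), (g34 *\<^sub>R e3, e4)]"
  have pu: "pair2 \<alpha> uu = inner a (C6 \<alpha>)" if "form2 \<alpha>" for \<alpha>
    unfolding uu_def inC6 using form2_lin(3)[OF that] by simp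
  have "boundary2 br uu" unfolding boundary2_def
  proof (intro allI impI)
    fix \<alpha> assume "form2 \<alpha> \<and> closed2 br \<alpha>"
    thus "pair2 \<alpha> uu = 0" using pu aZ unfolding Zs_def by simp
  qed
  hence Pn: "Phi \<mu> uu uu \<le> 0" using N by blast
  have cUu: "cU c1 c2 uu = g12" "cU c1 c3 uu = g13" "cU c1 c4 uu = g14" "cU c2 c3 uu = g23" "cU c2 c4 uu = g24" "cU c3 c4 uu = g34"
    unfolding uu_def by (simp_all add: CL dl)
  have "Phi \<mu> uu uu = 2 * m * (g12 * g34 - g13 * g24 + g14 * g23)"
    using Phi_expand[OF m4 B, of uu uu] unfolding cUu m_def by (simp add: algebra_simps)
  hence Xn: "g12 * g34 - g13 * g24 + g14 * g23 \<le> 0" using Pn m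
    by (metis mult_le_0_iff mult_pos_pos not_less zero_less_numeral)
  have fom: "form2 om" and clo: "closed2 br om" using sy unfolding symplectic_def by auto
  have aom: "inner a (C6 om) = 0" using aZ fom clo unfolding Zs_def by simp
  define A0 where "A0 = om e1 e2"
  define B0 where "B0 = om e3 e4"
  define x0 where "x0 = (om e1 e3 + om e2 e4) / 2"
  define y0 where "y0 = (om e1 e4 - om e2 e3) / 2"
  have Qom: "om X (J X) = A0 * (c1 X * c1 X + c2 X * c2 X) + B0 * (c3 X * c3 X + c4 X * c4 X)
      + 2 * x0 * (c2 X * c3 X - c1 X * c4 X) + 2 * y0 * (c1 X * c3 X + c2 X * c4 X)" for X
    using tamedQ[OF fom, of X] unfolding A0_def B0_def x0_def y0_def by (simp add: field_simps)
  have nz: "X \<noteq> 0" if "c1 X \<noteq> 0 \<or> c3 X \<noteq> 0" for X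
    using that linear_0[OF cl(1)] linear_0[OF cl(3)] by auto
  have A0: "A0 > 0" using tm nz[of e1] Qom[of e1] dl unfolding tamed_def by auto
  have B0: "B0 > 0" using tm nz[of e3] Qom[of e3] dl unfolding tamed_def by auto
  define X0 where "X0 = B0 *\<^sub>R e1 + 0 *\<^sub>R e2 + (- y0) *\<^sub>R e3 + x0 *\<^sub>R e4"
  have cX0: "c1 X0 = B0" "c2 X0 = 0" "c3 X0 = - y0" "c4 X0 = x0" unfolding X0_def
    by (rule crd_coord[OF cl dl])+
  have "om X0 (J X0) > 0" using tm nz[of X0] cX0 B0 unfolding tamed_def by auto
  hence "B0 * (A0 * B0 - x0 * x0 - y0 * y0) > 0" unfolding Qom cX0 by (simp add: algebra_simps)
  hence xy0: "x0 * x0 + y0 * y0 < A0 * B0" using B0 by (simp add: zero_less_mult_iff)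
  define d where "d = g13 - g24"
  define e where "e = g14 + g23"
  have "4 * (g12 * g34 - g13 * g24 + g14 * g23) = 4 * g12 * g34 - ((g13 + g24) * (g13 + g24) + (g14 - g23) * (g14 - g23)) + (d * d + e * e)"
    unfolding d_def e_def by (simp add: algebra_simps)
  moreover have "(g13 + g24) * (g13 + g24) + (g14 - g23) * (g14 - g23) \<le> 4 * (g12 * g34)" using dc(3) by simp
  ultimately have "d * d + e * e \<le> 0" using Xn lin_aux by (metis mult.assoc)
  hence de: "d = 0" "e = 0" by (simp_all add: sum_squares_le_zero_iff)
  have "g12 * A0 + g34 * B0 + (g13 + g24) * x0 + (g14 - g23) * y0 = inner a (C6 om)"
  proof -
    have g: "g24 = g13" "g23 = - g14" using de unfolding d_def e_def by simp_all
    show ?thesis unfolding inC6 A0_def B0_def x0_def y0_def g by (simp add: field_simps)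
  qed
  hence "g12 * A0 + g34 * B0 + (g13 + g24) * x0 + (g14 - g23) * y0 = 0" using aom by simp
  from strict_cone[OF dc A0 B0 xy0 this]
  have "g12 = 0" "g34 = 0" "g13 + g24 = 0" "g14 - g23 = 0" by auto
  hence "g12 = 0 \<and> g13 = 0 \<and> g14 = 0 \<and> g23 = 0 \<and> g24 = 0 \<and> g34 = 0" using de unfolding d_def e_def by linarith
  hence "a = 0" unfolding ag by (simp add: zero_prod_def)
  thus False using a0 by simp
qed

theorem theorem1:
  fixes br :: "real^4 \<Rightarrow> real^4 \<Rightarrow> real^4"
    and \<mu> :: "real^4 \<Rightarrow> real^4 \<Rightarrow> real^4 \<Rightarrow> real^4 \<Rightarrow> real"
  assumes "lie_bracket br"
    and "volume_form \<mu>"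
    and "\<exists>\<omega>. positively_oriented_symplectic br \<mu> \<omega>"
  shows "tame_compatible br \<mu> \<longleftrightarrow> (\<forall>u. boundary2 br u \<longrightarrow> Phi \<mu> u u \<le> 0)"
proof -
  have m4: "form4 \<mu>" using assms(2) unfolding volume_form_def by simp
  obtain om c where sy: "symplectic br om" and c0: "c > 0"
    and wed: "\<And>v1 v2 v3 v4. wedge22 om om v1 v2 v3 v4 = c * \<mu> v1 v2 v3 v4"
    using assms(3) unfolding positively_oriented_symplectic_def by blast
  show ?thesis
  proof
    assume TC: "tame_compatible br \<mu>"
    show "\<forall>u. boundary2 br u \<longrightarrow> Phi \<mu> u u \<le> 0"
    proof (intro allI impI)
      fix u assume bd: "boundary2 br u"
      show "Phi \<mu> u u \<le> 0"
      proof (rule ccontr)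
        assume "\<not> Phi \<mu> u u \<le> 0"
        hence "Phi \<mu> u u > 0" by simp
        thus False using dirA[OF m4 sy c0 wed bd _ TC] by blast
      qed
    qed
  next
    assume N: "\<forall>u. boundary2 br u \<longrightarrow> Phi \<mu> u u \<le> 0"
    show "tame_compatible br \<mu>" unfolding tame_compatible_def
    proof (intro allI impI)
      fix J assume h: "almost_complex J \<and> induces_orientation \<mu> J \<and> (\<exists>\<omega>. symplectic br \<omega> \<and> tamed \<omega> J)"
      then obtain om' where "symplectic br om'" "tamed om' J" by blast
      thus "\<exists>\<omega>. symplectic br \<omega> \<and> compatible \<omega> J" using dirB[OF m4 N] h by blast
    qed
  qed
qed

end
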